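(* Let $(P_{ij})$ be an $(m+1)\times(d+1)$ non-negative matrix (indices $i\in\{0,\dots,m\}$, $j\in\{0,\dots,d\}$, $d\ge1$) with $\sum_iP_{ij}=1$ for all $j$, and let $P:\mathbb{R}^{d+1}_0\to\mathbb{R}^{m+1}_0$ be the associated linear map. Suppose there exists $\theta>0$ such that for every pair $j_1,j_2\in\{0,\dots,d\}$ there exists $i_0\in\{0,\dots,m\}$ with $P_{i_0j_1}\ge\theta$ and $P_{i_0j_2}\ge\theta$. Then the operator norm satisfies $\|P\|\le 1-\theta/d$.
   Context: $\mathbb{R}^n$ carries the $L^1$ norm $\|a\|=\sum_i|a_i|$, and $\mathbb{R}^n_0=\{a\in\mathbb{R}^n:\sum_ia_i=0\}$. Since column sums of $P$ are $1$, $P$ maps $\mathbb{R}^{d+1}_0$ into $\mathbb{R}^{m+1}_0$; the norm is taken with respect to the $L^1$ norms on these subspaces. *)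

theory Defs
  imports Complex_Main
begin

text \<open>Vectors in R^{n+1} are represented as functions nat => real indexed by 0..n,
  vanishing outside {0..n}.  Matrices (m+1)x(d+1) as functions nat => nat => real.\<close>

definition l1norm :: "nat \<Rightarrow> (nat \<Rightarrow> real) \<Rightarrow> real" where
  "l1norm n x = (\<Sum>i\<le>n. \<bar>x i\<bar>)"

definition zero_sum_space :: "nat \<Rightarrow> (nat \<Rightarrow> real) set" where
  "zero_sum_space n = {x. (\<forall>i>n. x i = 0) \<and> (\<Sum>i\<le>n. x i) = 0}"

definition matvec :: "nat \<Rightarrow> nat \<Rightarrow> (nat \<Rightarrow> nat \<Rightarrow> real) \<Rightarrow> (nat \<Rightarrow> real) \<Rightarrow> (nat \<Rightarrow> real)" where
  "matvec m d P x = (\<lambda>i. if i \<le> m then (\<Sum>j\<le>d. P i j * x j) else 0)"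

definition opnorm0 :: "nat \<Rightarrow> nat \<Rightarrow> (nat \<Rightarrow> nat \<Rightarrow> real) \<Rightarrow> real" where
  "opnorm0 m d P = (SUP x \<in> zero_sum_space d - {(\<lambda>_. 0)}. l1norm m (matvec m d P x) / l1norm d x)"

end

theory Submission
  imports Defs
begin

lemma col_bound:
  fixes P :: "nat \<Rightarrow> nat \<Rightarrow> real"
  assumes nn: "\<And>i j. i \<le> m \<Longrightarrow> j \<le> d \<Longrightarrow> P i j \<ge> 0"
    and cs: "\<And>j. j \<le> d \<Longrightarrow> (\<Sum>i\<le>m. P i j) = 1"
    and th: "\<And>j1 j2. j1 \<le> d \<Longrightarrow> j2 \<le> d \<Longrightarrow> \<exists>i0\<le>m. P i0 j1 \<ge> \<theta> \<and> P i0 j2 \<ge> \<theta>"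
    and j: "j \<le> d" and k: "k \<le> d"
  shows "(\<Sum>i\<le>m. \<bar>P i j - P i k\<bar>) \<le> 2 - 2 * \<theta>"
proof -
  have e: "\<And>i. \<bar>P i j - P i k\<bar> = P i j + P i k - 2 * min (P i j) (P i k)"
    by (simp add: min_def abs_if)
  have "(\<Sum>i\<le>m. \<bar>P i j - P i k\<bar>) = (\<Sum>i\<le>m. P i j) + (\<Sum>i\<le>m. P i k) - 2 * (\<Sum>i\<le>m. min (P i j) (P i k))"
    by (simp add: e sum.distrib sum_subtractf sum_distrib_left)
  also have "\<dots> = 2 - 2 * (\<Sum>i\<le>m. min (P i j) (P i k))" using cs j k by simp
  finally have eq: "(\<Sum>i\<le>m. \<bar>P i j - P i k\<bar>) = 2 - 2 * (\<Sum>i\<le>m. min (P i j) (P i k))" .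
  obtain i0 where i0: "i0 \<le> m" "P i0 j \<ge> \<theta>" "P i0 k \<ge> \<theta>" using th[OF j k] by blast
  have "min (P i0 j) (P i0 k) \<le> (\<Sum>i\<le>m. min (P i j) (P i k))"
    by (rule member_le_sum) (use i0 nn j k in auto)
  with i0 have "\<theta> \<le> (\<Sum>i\<le>m. min (P i j) (P i k))" by linarith
  with eq show ?thesis by linarith
qed

lemma key:
  fixes P :: "nat \<Rightarrow> nat \<Rightarrow> real" and x :: "nat \<Rightarrow> real"
  assumes nn: "\<And>i j. i \<le> m \<Longrightarrow> j \<le> d \<Longrightarrow> P i j \<ge> 0"
    and cs: "\<And>j. j \<le> d \<Longrightarrow> (\<Sum>i\<le>m. P i j) = 1"
    and th: "\<And>j1 j2. j1 \<le> d \<Longrightarrow> j2 \<le> d \<Longrightarrow> \<exists>i0\<le>m. P i0 j1 \<ge> \<theta> \<and> P i0 j2 \<ge> \<theta>"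
    and zs: "(\<Sum>j\<le>d. x j) = 0"
  shows "l1norm m (matvec m d P x) \<le> (1 - \<theta>) * l1norm d x"
proof -
  define xp where "xp j = max (x j) 0" for j
  define xn where "xn j = max (- x j) 0" for j
  have xpn: "\<And>j. x j = xp j - xn j" and xab: "\<And>j. \<bar>x j\<bar> = xp j + xn j"
    and xp0: "\<And>j. xp j \<ge> 0" and xn0: "\<And>j. xn j \<ge> 0"
    by (auto simp: xp_def xn_def max_def)
  define S where "S = (\<Sum>j\<le>d. xp j)"
  have SN: "(\<Sum>j\<le>d. xn j) = S"
    using zs unfolding S_def xpn by (simp add: sum_subtractf)
  have L: "l1norm d x = 2 * S"
    unfolding l1norm_def xab using SN by (simp add: sum.distrib S_def)
  have S0: "S \<ge> 0" unfolding S_def by (simp add: sum_nonneg xp0)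
  have row: "S * \<bar>matvec m d P x i\<bar> \<le> (\<Sum>j\<le>d. \<Sum>k\<le>d. xp j * xn k * \<bar>P i j - P i k\<bar>)" if i: "i \<le> m" for i
  proof -
    have "(\<Sum>j\<le>d. \<Sum>k\<le>d. xp j * xn k * (P i j - P i k))
        = (\<Sum>j\<le>d. \<Sum>k\<le>d. xn k * (xp j * P i j)) - (\<Sum>j\<le>d. \<Sum>k\<le>d. xp j * (xn k * P i k))"
      by (simp add: algebra_simps sum_subtractf)
    also have "\<dots> = S * (\<Sum>j\<le>d. xp j * P i j) - S * (\<Sum>k\<le>d. xn k * P i k)"
      by (simp add: sum_distrib_left[symmetric] sum_distrib_right[symmetric] SN S_def mult.commute)
    also have "\<dots> = S * matvec m d P x i"
      using i by (simp add: matvec_def xpn algebra_simps sum_subtractf)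
    finally have eq: "S * matvec m d P x i = (\<Sum>j\<le>d. \<Sum>k\<le>d. xp j * xn k * (P i j - P i k))" by simp
    have "S * \<bar>matvec m d P x i\<bar> = \<bar>\<Sum>j\<le>d. \<Sum>k\<le>d. xp j * xn k * (P i j - P i k)\<bar>"
      using S0 eq by (metis abs_mult abs_of_nonneg)
    also have "\<dots> \<le> (\<Sum>j\<le>d. \<bar>\<Sum>k\<le>d. xp j * xn k * (P i j - P i k)\<bar>)" by (rule sum_abs)
    also have "\<dots> \<le> (\<Sum>j\<le>d. \<Sum>k\<le>d. \<bar>xp j * xn k * (P i j - P i k)\<bar>)"
      by (intro sum_mono sum_abs)
    also have "\<dots> = (\<Sum>j\<le>d. \<Sum>k\<le>d. xp j * xn k * \<bar>P i j - P i k\<bar>)"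
      using xp0 xn0 by (simp add: abs_mult)
    finally show ?thesis .
  qed
  have "S * l1norm m (matvec m d P x) = (\<Sum>i\<le>m. S * \<bar>matvec m d P x i\<bar>)"
    by (simp add: l1norm_def sum_distrib_left)
  also have "\<dots> \<le> (\<Sum>i\<le>m. \<Sum>j\<le>d. \<Sum>k\<le>d. xp j * xn k * \<bar>P i j - P i k\<bar>)"
    by (intro sum_mono row) simp
  also have "\<dots> = (\<Sum>j\<le>d. \<Sum>k\<le>d. xp j * xn k * (\<Sum>i\<le>m. \<bar>P i j - P i k\<bar>))"
    by (simp add: sum_distrib_left sum.swap[of _ "atMost m"])
  also have "\<dots> \<le> (\<Sum>j\<le>d. \<Sum>k\<le>d. xp j * xn k * (2 - 2 * \<theta>))"
    by (intro sum_mono mult_left_mono col_bound[OF nn cs th]) (auto intro: mult_nonneg_nonneg xp0 xn0)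
  also have "\<dots> = (\<Sum>j\<le>d. xp j) * (\<Sum>k\<le>d. xn k) * (2 - 2 * \<theta>)"
    by (subst sum_product) (simp only: sum_distrib_right)
  also have "\<dots> = S * S * (2 - 2 * \<theta>)" by (simp add: SN S_def)
  finally have A: "S * l1norm m (matvec m d P x) \<le> S * (S * (2 - 2 * \<theta>))" by (simp add: mult.assoc)
  show ?thesis
  proof (cases "S = 0")
    case True
    have "\<forall>j\<in>atMost d. xp j = 0" using True sum_nonneg_eq_0_iff[of "atMost d" xp] xp0 unfolding S_def by auto
    moreover have "\<forall>j\<in>atMost d. xn j = 0" using True SN sum_nonneg_eq_0_iff[of "atMost d" xn] xn0 by auto
    ultimately have "\<And>j. j \<le> d \<Longrightarrow> x j = 0" using xpn by auto
    hence "matvec m d P x = (\<lambda>_. 0)" unfolding matvec_def by (auto intro!: ext)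
    thus ?thesis using True L by (simp add: l1norm_def)
  next
    case False
    with S0 have "S > 0" by simp
    with A have "l1norm m (matvec m d P x) \<le> S * (2 - 2 * \<theta>)" by simp
    thus ?thesis using L by (simp add: algebra_simps)
  qed
qed

theorem lemma4p6:
  fixes m d :: nat and P :: "nat \<Rightarrow> nat \<Rightarrow> real" and \<theta> :: real
  assumes "d \<ge> 1"
    and "\<And>i j. i \<le> m \<Longrightarrow> j \<le> d \<Longrightarrow> P i j \<ge> 0"
    and "\<And>j. j \<le> d \<Longrightarrow> (\<Sum>i\<le>m. P i j) = 1"
    and "\<theta> > 0"
    and "\<And>j1 j2. j1 \<le> d \<Longrightarrow> j2 \<le> d \<Longrightarrow> \<exists>i0\<le>m. P i0 j1 \<ge> \<theta> \<and> P i0 j2 \<ge> \<theta>"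
  shows "opnorm0 m d P \<le> 1 - \<theta> / real d"
proof -
  define e where "e = (\<lambda>j::nat. if j = 0 then (1::real) else if j = 1 then -1 else 0)"
  have "e \<in> zero_sum_space d"
    using assms(1) unfolding zero_sum_space_def e_def
    by (auto simp: sum.If_cases atMost_def)
  moreover have "e \<noteq> (\<lambda>_. 0)" unfolding e_def by (metis one_neq_zero)
  ultimately have ne: "zero_sum_space d - {(\<lambda>_. 0)} \<noteq> {}" by blast
  have td: "\<theta> / real d \<le> \<theta>"
    using assms(1,4) by (simp add: divide_le_eq)
  show ?thesis unfolding opnorm0_def
  proof (rule cSUP_least[OF ne])
    fix x assume x: "x \<in> zero_sum_space d - {(\<lambda>_. 0)}"
    hence zs: "(\<Sum>j\<le>d. x j) = 0" and out: "\<forall>i>d. x i = 0" and nz: "x \<noteq> (\<lambda>_. 0)"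
      by (auto simp: zero_sum_space_def)
    have pos: "l1norm d x > 0"
    proof (rule ccontr)
      assume "\<not> l1norm d x > 0"
      hence "l1norm d x = 0" unfolding l1norm_def by (smt (verit) sum_nonneg abs_ge_zero)
      hence "\<forall>j\<in>atMost d. \<bar>x j\<bar> = 0"
        unfolding l1norm_def by (subst sum_nonneg_eq_0_iff[symmetric]) auto
      hence "x = (\<lambda>_. 0)" using out by (intro ext) (metis abs_eq_0 atMost_iff not_le)
      with nz show False by simp
    qed
    have "l1norm m (matvec m d P x) \<le> (1 - \<theta>) * l1norm d x"
      by (rule key[OF assms(2,3,5) zs])
    hence "l1norm m (matvec m d P x) / l1norm d x \<le> 1 - \<theta>"
      using pos by (simp add: divide_le_eq)
    thus "l1norm m (matvec m d P x) / l1norm d x \<le> 1 - \<theta> / real d" using td by linarith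
  qed
qed

end
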